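(* Let $d\ge3$, $h\ge1$ and $0\le n\le h-1$. Then $$|G_{n+1}(d,h)/G_n(d,h)|=\begin{cases}\theta(d,h+1)^{d-1} & \text{if } n=0,\\ \theta(d,h+1-n)^{(d-2)d(d-1)^{n-1}} & \text{if } 1\le n\le h-1,\end{cases}$$ where $\theta(d,m):=\frac{(d-1)^m-1}{d-2}$.
   Context: Let $\mathcal{T}(d,h)$ be the rooted tree in which the root $0$ has $d$ children, every vertex at distance $1,\dots,h-1$ from the root has $d-1$ children, and the vertices at distance $h$ are leaves. Let $V$ be its vertex set, $A$ its adjacency matrix, $\Delta := dI-A$, and $\Lambda\subset\mathbb{Z}^V$ the lattice spanned by the rows of $\Delta$. Then $G(d,h):=\mathbb{Z}^V/\Lambda$; $\{\mathbf{x}_i:i\in V\}$ is the standard basis of $\mathbb{Z}^V$ and $\bar{\mathbf{x}}_i$ is the image of $\mathbf{x}_i$ in $G(d,h)$. For $0\le m\le h$, $G_m(d,h)$ is the subgroup of $G(d,h)$ generated by $\{\bar{\mathbf{x}}_i : i \text{ at distance}\le m\text{ from the root}\}$. *)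

theory Defs
  imports "HOL-Algebra.Algebra"
begin

text \<open>Vertices of the tree T(d,h) are encoded as lists: the root is the empty list,
  the children of the root are [a] with a < d, and the children of a non-root
  vertex xs are xs @ [b] with b < d - 1. The depth of a vertex is its length.\<close>

definition tree_V :: "nat \<Rightarrow> nat \<Rightarrow> nat list set" where
  "tree_V d h = {xs. length xs \<le> h \<and> (xs \<noteq> [] \<longrightarrow> hd xs < d)
                     \<and> (\<forall>b \<in> set (tl xs). b < d - 1)}"

definition tree_adj :: "nat \<Rightarrow> nat \<Rightarrow> nat list \<Rightarrow> nat list \<Rightarrow> bool" where
  "tree_adj d h xs ys \<longleftrightarrow> xs \<in> tree_V d h \<and> ys \<in> tree_V d h \<and>
     ((\<exists>c. ys = xs @ [c]) \<or> (\<exists>c. xs = ys @ [c]))"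

definition adjA :: "nat \<Rightarrow> nat \<Rightarrow> nat list \<Rightarrow> nat list \<Rightarrow> int" where
  "adjA d h i j = (if tree_adj d h i j then 1 else 0)"

definition Delta :: "nat \<Rightarrow> nat \<Rightarrow> nat list \<Rightarrow> nat list \<Rightarrow> int" where
  "Delta d h i j = (if i = j then int d else 0) - adjA d h i j"

definition ZV :: "nat \<Rightarrow> nat \<Rightarrow> (nat list \<Rightarrow> int) monoid" where
  "ZV d h = \<lparr>carrier = {f. \<forall>x. x \<notin> tree_V d h \<longrightarrow> f x = 0},
             monoid.mult = (\<lambda>f g x. f x + g x), one = (\<lambda>x. 0)\<rparr>"

definition Delta_row :: "nat \<Rightarrow> nat \<Rightarrow> nat list \<Rightarrow> (nat list \<Rightarrow> int)" where
  "Delta_row d h i = (\<lambda>j. if j \<in> tree_V d h then Delta d h i j else 0)"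

definition basis_x :: "nat list \<Rightarrow> (nat list \<Rightarrow> int)" where
  "basis_x i = (\<lambda>j. if j = i then 1 else 0)"

definition Lattice :: "nat \<Rightarrow> nat \<Rightarrow> (nat list \<Rightarrow> int) set" where
  "Lattice d h = generate (ZV d h) (Delta_row d h ` tree_V d h)"

definition Gdh :: "nat \<Rightarrow> nat \<Rightarrow> (nat list \<Rightarrow> int) set monoid" where
  "Gdh d h = ZV d h Mod Lattice d h"

definition xbar :: "nat \<Rightarrow> nat \<Rightarrow> nat list \<Rightarrow> (nat list \<Rightarrow> int) set" where
  "xbar d h i = Lattice d h #>\<^bsub>ZV d h\<^esub> basis_x i"

definition Gm :: "nat \<Rightarrow> nat \<Rightarrow> nat \<Rightarrow> (nat list \<Rightarrow> int) set set" where
  "Gm d h m = generate (Gdh d h) (xbar d h ` {i \<in> tree_V d h. length i \<le> m})"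

definition theta :: "nat \<Rightarrow> nat \<Rightarrow> nat" where
  "theta d m = ((d - 1) ^ m - 1) div (d - 2)"

end

theory Submission
  imports Defs
begin

lemma ZV_carrier: "f \<in> carrier (ZV d h) \<longleftrightarrow> (\<forall>x. x \<notin> tree_V d h \<longrightarrow> f x = 0)"
  by (simp add: ZV_def)
lemma ZV_mult: "f \<otimes>\<^bsub>ZV d h\<^esub> g = (\<lambda>x. f x + g x)"
  by (simp add: ZV_def)
lemma ZV_one: "\<one>\<^bsub>ZV d h\<^esub> = (\<lambda>x. 0)"
  by (simp add: ZV_def)

lemma ZV_cg: "comm_group (ZV d h)"
proof (rule comm_groupI)
  fix x assume "x \<in> carrier (ZV d h)"
  then show "\<exists>y\<in>carrier (ZV d h). y \<otimes>\<^bsub>ZV d h\<^esub> x = \<one>\<^bsub>ZV d h\<^esub>"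
    by (intro bexI[of _ "\<lambda>t. - x t"]) (auto simp: ZV_def)
qed (auto simp: ZV_def)

lemma ZV_group: "group (ZV d h)"
  using ZV_cg comm_group.axioms(2) by blast

lemma ZV_inv: "f \<in> carrier (ZV d h) \<Longrightarrow> inv\<^bsub>ZV d h\<^esub> f = (\<lambda>x. - f x)"
  by (rule group.inv_equality[OF ZV_group]) (auto simp: ZV_def)

lemma Delta_row_carrier: "Delta_row d h w \<in> carrier (ZV d h)"
  by (simp add: ZV_def Delta_row_def)

lemma Lattice_subgroup: "subgroup (Lattice d h) (ZV d h)"
  unfolding Lattice_def
  by (rule group.generate_is_subgroup[OF ZV_group]) (auto simp: Delta_row_carrier)

lemma Lattice_normal: "Lattice d h \<lhd> ZV d h"
  by (rule comm_group.subgroup_imp_normal[OF ZV_cg Lattice_subgroup])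

lemma Gdh_group: "group (Gdh d h)"
  unfolding Gdh_def by (rule normal.factorgroup_is_group[OF Lattice_normal])

lemma subgroup_ZV_smult:
  assumes H: "subgroup H (ZV d h)" and g: "g \<in> H"
  shows "(\<lambda>y. k * g y) \<in> H"
proof -
  have gc: "g \<in> carrier (ZV d h)" using subgroup.mem_carrier[OF H g] .
  have nat: "(\<lambda>y. int m * g y) \<in> H" for m :: nat
  proof (induction m)
    case 0
    have "(\<lambda>y. int 0 * g y) = \<one>\<^bsub>ZV d h\<^esub>" by (simp add: ZV_one)
    then show ?case using subgroup.one_closed[OF H] by metis
  next
    case (Suc m)
    have "(\<lambda>y. int (Suc m) * g y) = g \<otimes>\<^bsub>ZV d h\<^esub> (\<lambda>y. int m * g y)"
      unfolding ZV_mult by (rule ext) (simp add: algebra_simps)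
    then show ?case using subgroup.m_closed[OF H g Suc] by metis
  qed
  show ?thesis
  proof (cases "k \<ge> 0")
    case True
    then have "(\<lambda>y. k * g y) = (\<lambda>y. int (nat k) * g y)" by simp
    then show ?thesis using nat[of "nat k"] by metis
  next
    case False
    have c: "(\<lambda>y. int (nat (-k)) * g y) \<in> carrier (ZV d h)"
      using subgroup.mem_carrier[OF H nat[of "nat (-k)"]] .
    have "(\<lambda>y. k * g y) = inv\<^bsub>ZV d h\<^esub> (\<lambda>y. int (nat (-k)) * g y)"
      unfolding ZV_inv[OF c] using False by (intro ext) simp
    then show ?thesis using subgroup.m_inv_closed[OF H nat[of "nat (-k)"]] by metis
  qed
qed

lemma lincomb_Lattice:
  assumes "finite S" "S \<subseteq> tree_V d h"
  shows "(\<lambda>y. \<Sum>w\<in>S. a w * Delta_row d h w y) \<in> Lattice d h"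
  using assms
proof (induction S rule: finite_induct)
  case empty
  then show ?case using subgroup.one_closed[OF Lattice_subgroup] by (simp add: ZV_one)
next
  case (insert w S)
  have g: "Delta_row d h w \<in> Lattice d h"
    unfolding Lattice_def using insert.prems by (intro generate.incl) auto
  have eq: "(\<lambda>y. \<Sum>w\<in>insert w S. a w * Delta_row d h w y) =
     (\<lambda>y. a w * Delta_row d h w y) \<otimes>\<^bsub>ZV d h\<^esub> (\<lambda>y. \<Sum>w\<in>S. a w * Delta_row d h w y)"
    using insert by (simp add: ZV_mult)
  have ih: "(\<lambda>y. \<Sum>w\<in>S. a w * Delta_row d h w y) \<in> Lattice d h"
    using insert.IH insert.prems by blast
  show ?case unfolding eq
    by (rule subgroup.m_closed[OF Lattice_subgroup subgroup_ZV_smult[OF Lattice_subgroup g] ih])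
qed

lemma functional_Lattice:
  assumes fin: "finite (tree_V d h)"
    and gen: "\<And>x. x \<in> tree_V d h \<Longrightarrow> (t::int) dvd (\<Sum>w\<in>tree_V d h. wt w * Delta_row d h x w)"
    and f: "f \<in> Lattice d h"
  shows "t dvd (\<Sum>w\<in>tree_V d h. wt w * f w)"
  using f unfolding Lattice_def
proof (induction f rule: generate.induct)
  case one
  then show ?case by (simp add: ZV_one)
next
  case (incl g)
  then show ?case using gen by auto
next
  case (inv g)
  then obtain x where x: "x \<in> tree_V d h" "g = Delta_row d h x" by auto
  have "inv\<^bsub>ZV d h\<^esub> g = (\<lambda>y. - g y)" using x by (simp add: ZV_inv Delta_row_carrier)
  then show ?case using gen[OF x(1)] x by (simp add: sum_negf)
next
  case (eng g1 g2)
  have "(\<Sum>w\<in>tree_V d h. wt w * (g1 \<otimes>\<^bsub>ZV d h\<^esub> g2) w) =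
    (\<Sum>w\<in>tree_V d h. wt w * g1 w) + (\<Sum>w\<in>tree_V d h. wt w * g2 w)"
    unfolding ZV_mult by (simp only: distrib_left sum.distrib)
  then show ?case using eng.IH by (metis dvd_add)
qed

definition thS :: "nat \<Rightarrow> nat \<Rightarrow> nat" where "thS d m = (\<Sum>i<m. (d-1)^i)"

lemma thS_pow: "d \<ge> 3 \<Longrightarrow> (d-1)^m = (d-2) * thS d m + 1"
proof (induction m)
  case 0 then show ?case by (simp add: thS_def)
next
  case (Suc m)
  obtain e where e: "d = e + 3" using Suc.prems by (metis add.commute le_add_diff_inverse)
  have "(d-1)^Suc m = (e+2) * ((e+1) * thS d m + 1)" using Suc e by simp
  also have "\<dots> = (e+1) * (thS d m + (e+2)^m) + 1"
    using Suc e by (simp add: algebra_simps)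
  also have "\<dots> = (d-2) * thS d (Suc m) + 1" using e by (simp add: thS_def)
  finally show ?case .
qed

lemma theta_thS: "d \<ge> 3 \<Longrightarrow> theta d m = thS d m"
  unfolding theta_def using thS_pow[of d m] by simp

lemma thS_Suc: "d \<ge> 3 \<Longrightarrow> thS d (Suc m) = (d-1) * thS d m + 1"
proof -
  assume d: "d \<ge> 3"
  obtain e where e: "d = e + 3" using d by (metis add.commute le_add_diff_inverse)
  have "(e+1) * thS d (Suc m) + 1 = (e+2) * ((e+1) * thS d m + 1)"
    using thS_pow[OF d, of "Suc m"] thS_pow[OF d, of m] e by simp
  also have "\<dots> = (e+1) * ((e+2) * thS d m + 1) + 1" by (simp add: algebra_simps)
  finally have eq: "(e+1) * thS d (Suc m) = (e+1) * ((e+2) * thS d m + 1)" by simp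
  have "thS d (Suc m) = (e+2) * thS d m + 1"
    using eq mult_cancel_left[of "e+1" "thS d (Suc m)" "(e+2) * thS d m + 1"] by simp
  then show ?thesis using e by simp
qed

lemma theta_0: "theta d 0 = 0" by (simp add: theta_def)

lemma theta_Suc: "d \<ge> 3 \<Longrightarrow> theta d (Suc m) = (d-1) * theta d m + 1"
  using theta_thS thS_Suc by simp

lemma theta_rec_int: "d \<ge> 3 \<Longrightarrow>
  int d * int (theta d (Suc m)) - (int d - 1) * int (theta d m) = int (theta d (Suc (Suc m)))"
proof -
  assume d: "d \<ge> 3"
  have a: "int (theta d (Suc m)) = (int d - 1) * int (theta d m) + 1"
    using theta_Suc[OF d, of m] d by simp
  have b: "int (theta d (Suc (Suc m))) = (int d - 1) * int (theta d (Suc m)) + 1"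
    using theta_Suc[OF d, of "Suc m"] d by simp
  show ?thesis using a b by (simp add: algebra_simps)
qed

lemma theta_coprime: "d \<ge> 3 \<Longrightarrow> coprime (int (theta d m)) (int (theta d (Suc m)))"
proof -
  assume d: "d \<ge> 3"
  have b: "int (theta d (Suc m)) = (int d - 1) * int (theta d m) + 1"
    using theta_Suc[OF d, of m] d by simp
  show ?thesis unfolding b
    by (metis coprime_add_one_right coprime_mult_left_iff mult.commute)
qed

lemma theta_pos: "d \<ge> 3 \<Longrightarrow> theta d (Suc m) > 0"
  using theta_Suc by simp



lemma V_Nil: "[] \<in> tree_V d h" by (simp add: tree_V_def)

lemma V_Cons: "a # ys \<in> tree_V d h \<longleftrightarrow> Suc (length ys) \<le> h \<and> a < d \<and> (\<forall>b\<in>set ys. b < d - 1)"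
  by (simp add: tree_V_def)

lemma V_snoc: "y @ [b] \<in> tree_V d h \<longleftrightarrow>
   y \<in> tree_V d h \<and> length y < h \<and> b < (if y = [] then d else d - 1)"
  by (cases y) (auto simp: tree_V_def)

lemma V_butlast: "y \<in> tree_V d h \<Longrightarrow> butlast y \<in> tree_V d h"
proof (cases "y = []")
  case False
  assume "y \<in> tree_V d h"
  then have "butlast y @ [last y] \<in> tree_V d h" using False by simp
  then show ?thesis using V_snoc by blast
qed simp

lemma V_finite: "finite (tree_V d h)"
proof -
  have "tree_V d h \<subseteq> {xs. set xs \<subseteq> {..<d} \<and> length xs \<le> h}"
  proof
    fix xs assume xs: "xs \<in> tree_V d h"
    show "xs \<in> {xs. set xs \<subseteq> {..<d} \<and> length xs \<le> h}"
    proof (cases xs)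
      case Nil then show ?thesis using xs by (simp add: tree_V_def)
    next
      case (Cons a ys) then show ?thesis using xs by (auto simp: tree_V_def)
    qed
  qed
  moreover have "finite {xs. set xs \<subseteq> {..<d} \<and> length xs \<le> h}"
    by (rule finite_lists_length_le) simp
  ultimately show ?thesis by (rule finite_subset)
qed

lemma adj_sym: "tree_adj d h x y = tree_adj d h y x"
  unfolding tree_adj_def by blast

lemma adj_irrefl: "\<not> tree_adj d h y y"
  by (simp add: tree_adj_def)

lemma Delta_sym: "Delta d h x y = Delta d h y x"
  unfolding Delta_def adjA_def using adj_sym[of d h x y] by auto

abbreviation bd :: "nat \<Rightarrow> nat list \<Rightarrow> nat" where "bd d y \<equiv> (if y = [] then d else d - 1)"

lemma nbrs:
  assumes y: "y \<in> tree_V d h"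
  shows "{w \<in> tree_V d h. tree_adj d h y w} =
    (if y = [] then {} else {butlast y}) \<union>
    (if length y < h then (\<lambda>b. y @ [b]) ` {..<bd d y} else {})"
proof -
  have L: "w \<in> (if y = [] then {} else {butlast y}) \<union>
    (if length y < h then (\<lambda>b. y @ [b]) ` {..<bd d y} else {})"
    if "w \<in> {w \<in> tree_V d h. tree_adj d h y w}" for w
  proof -
    have w: "w \<in> tree_V d h" and disj: "(\<exists>c. w = y @ [c]) \<or> (\<exists>c. y = w @ [c])"
      using that by (auto simp: tree_adj_def)
    from disj show ?thesis
    proof
      assume "\<exists>c. w = y @ [c]"
      then obtain c where c: "w = y @ [c]" by blast
      then have "length y < h" "c < bd d y" using w V_snoc by blast+
      then show ?thesis using c by auto
    next
      assume "\<exists>c. y = w @ [c]"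
      then obtain c where "y = w @ [c]" by blast
      then show ?thesis by simp
    qed
  qed
  have R: "w \<in> {w \<in> tree_V d h. tree_adj d h y w}"
    if w_in: "w \<in> (if y = [] then {} else {butlast y}) \<union>
    (if length y < h then (\<lambda>b. y @ [b]) ` {..<bd d y} else {})" for w
  proof -
    consider "y \<noteq> []" "w = butlast y" | b where "length y < h" "b < bd d y" "w = y @ [b]"
      using w_in by (auto split: if_splits)
    then show ?thesis
    proof cases
      case 1
      then have "y = w @ [last y]" by simp
      then have "tree_adj d h y w" using y 1 V_butlast[OF y] unfolding tree_adj_def by blast
      then show ?thesis using 1 V_butlast[OF y] by simp
    next
      case 2
      then have "w \<in> tree_V d h" using y V_snoc by blast
      then show ?thesis using y 2 by (auto simp: tree_adj_def)
    qed
  qed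
  show ?thesis using L R by blast
qed

lemma NS:
  assumes y: "y \<in> tree_V d h"
  shows "(\<Sum>w\<in>tree_V d h. a w * Delta d h y w) =
    int d * a y - (if y = [] then 0 else a (butlast y))
      - (if length y < h then (\<Sum>b<bd d y. a (y @ [b])) else 0)"
proof -
  let ?V = "tree_V d h"
  have fin: "finite ?V" by (rule V_finite)
  have "(\<Sum>w\<in>?V. a w * Delta d h y w) =
     (\<Sum>w\<in>?V. (if y = w then int d * a w else 0)) - (\<Sum>w\<in>?V. (if tree_adj d h y w then a w else 0))"
    unfolding sum_subtractf[symmetric] by (rule sum.cong) (auto simp: Delta_def adjA_def adj_irrefl)
  also have "(\<Sum>w\<in>?V. (if y = w then int d * a w else 0)) = int d * a y"
    using fin y by (simp add: sum.delta)
  also have "(\<Sum>w\<in>?V. (if tree_adj d h y w then a w else 0)) = (\<Sum>w\<in>{w \<in> ?V. tree_adj d h y w}. a w)"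
    using fin by (simp add: sum.inter_filter)
  also have "\<dots> = (if y = [] then 0 else a (butlast y))
      + (if length y < h then (\<Sum>b<bd d y. a (y @ [b])) else 0)"
  proof -
    have disj: "(if y = [] then {} else {butlast y}) \<inter>
      (if length y < h then (\<lambda>b. y @ [b]) ` {..<bd d y} else {}) = {}"
      by (auto split: if_splits dest!: arg_cong[where f=length])
    have inj: "inj_on (\<lambda>b. y @ [b]) {..<bd d y}" by (auto simp: inj_on_def)
    show ?thesis unfolding nbrs[OF y]
      by (subst sum.union_disjoint[OF _ _ disj]) (auto simp: sum.reindex[OF inj])
  qed
  finally show ?thesis by simp
qed

definition Zf :: "nat \<Rightarrow> nat \<Rightarrow> nat \<Rightarrow> int" where
  "Zf d h l = int (theta d (h + 1 - l))"

lemma Zf_rec: "d \<ge> 3 \<Longrightarrow> 1 \<le> l \<Longrightarrow> l \<le> h \<Longrightarrow>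
   int d * Zf d h l - (int d - 1) * Zf d h (l+1) = Zf d h (l - 1)"
proof -
  assume d: "d \<ge> 3" and l: "1 \<le> l" "l \<le> h"
  define m where "m = h - l"
  have e1: "h + 1 - l = Suc m" and e2: "h + 1 - (l+1) = m" and e3: "h + 1 - (l - 1) = Suc (Suc m)"
    using l unfolding m_def by auto
  show ?thesis unfolding Zf_def e1 e2 e3 by (rule theta_rec_int[OF d])
qed

lemma Zf_top: "Zf d h (h+1) = 0"
  by (simp add: Zf_def theta_0)

lemma take_len: "take k x = c \<Longrightarrow> length c = k \<Longrightarrow> k \<le> length x"
  by auto

lemma take_snoc: "k \<le> length x \<Longrightarrow> take k (x @ [b]) = take k x"
  by simp

lemma take_butlast1:
  assumes "take k (butlast x) = c" "length c = k" shows "take k x = c"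
proof -
  have "length (take k (butlast x)) = k" using assms by simp
  then have k: "k \<le> length x - 1" by (simp add: min_def split: if_splits)
  have "take k (butlast x) = take k x" using k by (simp add: butlast_conv_take min_def)
  then show ?thesis using assms by simp
qed

lemma take_butlast2: "take k x = c \<Longrightarrow> length x > k \<Longrightarrow> take k (butlast x) = c"
  by (auto simp: butlast_conv_take min_def)

definition wtc :: "nat \<Rightarrow> nat \<Rightarrow> nat list \<Rightarrow> nat list \<Rightarrow> int" where
  "wtc d h c w = (if take (length c) w = c then Zf d h (length w) else 0)"

lemma CL:
  assumes d: "d \<ge> 3" and c: "c \<in> tree_V d h" "length c = Suc n" and x: "x \<in> tree_V d h"
  shows "(\<Sum>w\<in>tree_V d h. wtc d h c w * Delta d h x w) =
     (if x = c then Zf d h n else if x = butlast c then - Zf d h (Suc n) else 0)"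
proof -
  have NSx: "(\<Sum>w\<in>tree_V d h. wtc d h c w * Delta d h x w) =
    int d * wtc d h c x - (if x = [] then 0 else wtc d h c (butlast x))
      - (if length x < h then (\<Sum>b<bd d x. wtc d h c (x @ [b])) else 0)"
    by (rule NS[OF x])
  have lx: "length x \<le> h" using x by (simp add: tree_V_def)
  have lc: "Suc n \<le> h" using c by (simp add: tree_V_def)
  show ?thesis
  proof (cases "take (Suc n) x = c")
    case A: True
    have len: "Suc n \<le> length x" using A c(2) by auto
    then have xne: "x \<noteq> []" by auto
    have wx: "wtc d h c x = Zf d h (length x)" using A c(2) by (simp add: wtc_def)
    have ch: "(if length x < h then (\<Sum>b<bd d x. wtc d h c (x @ [b])) else 0)
        = (int d - 1) * Zf d h (length x + 1)"
    proof (cases "length x < h")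
      case True
      have "(\<Sum>b<bd d x. wtc d h c (x @ [b])) = (\<Sum>b<d-1. Zf d h (length x + 1))"
        using xne len A c(2) by (intro sum.cong) (auto simp: wtc_def)
      also have "\<dots> = (int d - 1) * Zf d h (length x + 1)" using d by simp
      finally show ?thesis using True by simp
    next
      case False
      then have "length x = h" using lx by simp
      then show ?thesis using False Zf_top[of d h] by simp
    qed
    show ?thesis
    proof (cases "x = c")
      case True
      have "length (take (Suc n) (butlast x)) = n" using True c(2) by simp
      then have "take (Suc n) (butlast x) \<noteq> c" using c(2) by auto
      then have "wtc d h c (butlast x) = 0" using c(2) by (simp add: wtc_def)
      then have "(\<Sum>w\<in>tree_V d h. wtc d h c w * Delta d h x w) =
          int d * Zf d h (Suc n) - (int d - 1) * Zf d h (Suc n + 1)"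
        using NSx wx ch True c(2) xne by simp
      also have "\<dots> = Zf d h n" using Zf_rec[OF d, where l="Suc n" and h=h] lc by simp
      finally show ?thesis using True by simp
    next
      case False
      have gt: "Suc n < length x" using len A False c(2) by (cases "length x = Suc n") auto
      have "take (Suc n) (butlast x) = c" using take_butlast2[OF A gt] .
      then have wb: "wtc d h c (butlast x) = Zf d h (length x - 1)"
        using c(2) by (simp add: wtc_def)
      have "(\<Sum>w\<in>tree_V d h. wtc d h c w * Delta d h x w) =
          int d * Zf d h (length x) - Zf d h (length x - 1) - (int d - 1) * Zf d h (length x + 1)"
        using NSx wx ch wb xne by simp
      also have "\<dots> = 0"
      proof -
        have r: "int d * Zf d h (length x) - (int d - 1) * Zf d h (length x + 1) = Zf d h (length x - 1)"
          using Zf_rec[OF d, where l="length x" and h=h] lx gt by simp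
        then show ?thesis by linarith
      qed
      moreover have "x \<noteq> butlast c" using gt c(2) by auto
      ultimately show ?thesis using False by simp
    qed
  next
    case B: False
    have wx: "wtc d h c x = 0" using B c(2) by (simp add: wtc_def)
    have wb: "(if x = [] then 0 else wtc d h c (butlast x)) = 0"
    proof -
      have "take (Suc n) (butlast x) \<noteq> c" using B c(2) take_butlast1[of "Suc n" x c] by blast
      then show ?thesis using c(2) by (simp add: wtc_def)
    qed
    have ch: "(if length x < h then (\<Sum>b<bd d x. wtc d h c (x @ [b])) else 0)
        = (if x = butlast c then Zf d h (Suc n) else 0)"
    proof (cases "x = butlast c")
      case True
      have cne: "c \<noteq> []" using c(2) by auto
      have cdec: "c = x @ [last c]" using True cne by simp
      have lxh: "length x < h" using True c(2) lc by simp
      have lastc: "last c < bd d x" using c(1) cdec V_snoc by metis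
      have "(\<Sum>b<bd d x. wtc d h c (x @ [b])) = (\<Sum>b<bd d x. if b = last c then Zf d h (Suc n) else 0)"
      proof (rule sum.cong)
        fix b assume "b \<in> {..<bd d x}"
        have "take (length c) (x @ [b]) = x @ [b]" using True c(2) by simp
        moreover have "(x @ [b] = c) = (b = last c)" using cdec by (metis butlast_snoc last_snoc)
        moreover have "length (x @ [b]) = Suc n" using True c(2) by simp
        ultimately show "wtc d h c (x @ [b]) = (if b = last c then Zf d h (Suc n) else 0)"
          by (simp add: wtc_def)
      qed simp
      also have "\<dots> = Zf d h (Suc n)" using lastc by (simp add: sum.delta)
      finally show ?thesis using True lxh by simp
    next
      case False
      have "wtc d h c (x @ [b]) = 0" for b
      proof (cases "Suc n \<le> length x")
        case True
        then show ?thesis using B c(2) by (simp add: wtc_def)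
      next
        case F2: False
        have "take (Suc n) (x @ [b]) \<noteq> c"
        proof
          assume eq: "take (Suc n) (x @ [b]) = c"
          then have "length (x @ [b]) \<ge> Suc n" using c(2) by auto
          then have "x @ [b] = c" using eq F2 c(2) by simp
          then show False using False by auto
        qed
        then show ?thesis using c(2) by (simp add: wtc_def)
      qed
      then show ?thesis using False by simp
    qed
    have "x \<noteq> c" using B c(2) by auto
    then show ?thesis using NSx wx wb ch by simp
  qed
qed

definition Eset :: "nat \<Rightarrow> nat \<Rightarrow> nat \<Rightarrow> (nat list \<Rightarrow> int) set" where
  "Eset d h m = {f \<in> carrier (ZV d h). \<forall>x. m < length x \<longrightarrow> f x = 0}"

definition sib :: "nat \<Rightarrow> nat \<Rightarrow> nat \<Rightarrow> nat list \<Rightarrow> nat list \<Rightarrow> bool" where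
  "sib d h n c c' \<longleftrightarrow> c \<in> tree_V d h \<and> c' \<in> tree_V d h \<and> length c = Suc n \<and> length c' = Suc n
     \<and> butlast c = butlast c'"

lemma Delta_row_V: "w \<in> tree_V d h \<Longrightarrow> Delta_row d h x w = Delta d h x w"
  by (simp add: Delta_row_def)

lemma Char_imp:
  assumes d: "d \<ge> 3" and f: "f \<in> Eset d h (Suc n)" and g: "g \<in> Eset d h n"
    and L: "(\<lambda>x. f x - g x) \<in> Lattice d h" and s: "sib d h n c c'"
  shows "Zf d h n dvd f c - f c'"
proof -
  let ?V = "tree_V d h"
  define wt where "wt w = wtc d h c w - wtc d h c' w" for w
  have c: "c \<in> ?V" "length c = Suc n" and c': "c' \<in> ?V" "length c' = Suc n"
    and bl: "butlast c = butlast c'" using s by (auto simp: sib_def)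
  have gen: "Zf d h n dvd (\<Sum>w\<in>?V. wt w * Delta_row d h x w)" if x: "x \<in> ?V" for x
  proof -
    have eq1: "(\<Sum>w\<in>?V. wt w * Delta_row d h x w) =
      (\<Sum>w\<in>?V. wtc d h c w * Delta d h x w) - (\<Sum>w\<in>?V. wtc d h c' w * Delta d h x w)"
      unfolding sum_subtractf[symmetric]
    proof (rule sum.cong)
      fix w assume "w \<in> ?V"
      show "wt w * Delta_row d h x w = wtc d h c w * Delta d h x w - wtc d h c' w * Delta d h x w"
        unfolding wt_def Delta_row_V[OF \<open>w \<in> ?V\<close>] by (rule left_diff_distrib)
    qed simp
    have ne: "c \<noteq> butlast c'" "c' \<noteq> butlast c"
    proof -
      show "c \<noteq> butlast c'"
      proof
        assume "c = butlast c'"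
        then have "length c = length (butlast c')" by simp
        then show False using c(2) c'(2) by simp
      qed
      show "c' \<noteq> butlast c"
      proof
        assume "c' = butlast c"
        then have "length c' = length (butlast c)" by simp
        then show False using c(2) c'(2) by simp
      qed
    qed
    have "Zf d h n dvd ((if x = c then Zf d h n else if x = butlast c then - Zf d h (Suc n) else 0)
       - (if x = c' then Zf d h n else if x = butlast c' then - Zf d h (Suc n) else 0))"
    proof (cases "x = c")
      case True
      show ?thesis
      proof (cases "x = c'")
        case True
        then show ?thesis using \<open>x = c\<close> by simp
      next
        case False
        have "x \<noteq> butlast c'" using ne \<open>x = c\<close> by simp
        then show ?thesis using \<open>x = c\<close> False by simp
      qed
    next
      case F1: False
      show ?thesis
      proof (cases "x = c'")
        case True
        have "x \<noteq> butlast c" using ne True by simp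
        then show ?thesis using F1 True by simp
      next
        case False
        then show ?thesis using F1 unfolding bl by simp
      qed
    qed
    then show ?thesis unfolding eq1 CL[OF d c x] CL[OF d c' x] .
  qed
  have "Zf d h n dvd (\<Sum>w\<in>?V. wt w * (\<lambda>x. f x - g x) w)"
    by (rule functional_Lattice[OF V_finite gen L])
  moreover have "(\<Sum>w\<in>?V. wt w * (\<lambda>x. f x - g x) w) = Zf d h (Suc n) * (f c - f c')"
  proof -
    have one: "wtc d h b w * (f w - g w) = (if w = b then Zf d h (Suc n) * f b else 0)"
      if b: "length b = Suc n" for b w
    proof (cases "take (Suc n) w = b")
      case True
      have "n < length w" using True b by auto
      then have gw: "g w = 0" using g by (simp add: Eset_def)
      show ?thesis
      proof (cases "w = b")
        case True
        then show ?thesis using gw b by (simp add: wtc_def)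
      next
        case False
        have "length w \<noteq> Suc n" using \<open>take (Suc n) w = b\<close> False by auto
        then have "Suc n < length w" using \<open>n < length w\<close> by simp
        then have "f w = 0" using f by (simp add: Eset_def)
        then show ?thesis using gw False by simp
      qed
    next
      case False
      then show ?thesis using b by (auto simp: wtc_def)
    qed
    have "(\<Sum>w\<in>?V. wt w * (\<lambda>x. f x - g x) w) =
       (\<Sum>w\<in>?V. (if w = c then Zf d h (Suc n) * f c else 0)) - (\<Sum>w\<in>?V. (if w = c' then Zf d h (Suc n) * f c' else 0))"
      unfolding sum_subtractf[symmetric]
    proof (rule sum.cong)
      fix w assume "w \<in> ?V"
      show "wt w * (\<lambda>x. f x - g x) w = (if w = c then Zf d h (Suc n) * f c else 0) -
         (if w = c' then Zf d h (Suc n) * f c' else 0)"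
        unfolding wt_def left_diff_distrib one[OF c(2)] one[OF c'(2)] by simp
    qed simp
    also have "\<dots> = Zf d h (Suc n) * (f c - f c')"
      using c c' V_finite by (simp add: sum.delta right_diff_distrib)
    finally show ?thesis .
  qed
  ultimately have "Zf d h n dvd Zf d h (Suc n) * (f c - f c')" by simp
  moreover have "coprime (Zf d h n) (Zf d h (Suc n))"
  proof -
    have lc: "Suc n \<le> h" using c by (simp add: tree_V_def)
    have e: "h + 1 - n = Suc (h + 1 - Suc n)" using lc by simp
    show ?thesis unfolding Zf_def e using theta_coprime[OF d, of "h + 1 - Suc n"]
      by (simp add: coprime_commute)
  qed
  ultimately show ?thesis using coprime_dvd_mult_right_iff by blast
qed

lemma Char_rev:
  assumes d: "d \<ge> 3" and f: "f \<in> Eset d h (Suc n)"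
    and dv: "\<And>c c'. sib d h n c c' \<Longrightarrow> Zf d h n dvd f c - f c'"
  shows "\<exists>e\<in>Eset d h n. (\<lambda>x. f x - e x) \<in> Lattice d h"
proof -
  let ?V = "tree_V d h"
  define t where "t v = f (v @ [0])" for v
  define q where "q c = (f c - t (butlast c)) div Zf d h n" for c
  define a where "a w = (if length w = n then - t w else if n < length w
       then q (take (Suc n) w) * Zf d h (length w) else 0)" for w
  define L where "L = (\<lambda>y. \<Sum>w\<in>?V. a w * Delta_row d h w y)"
  have LL: "L \<in> Lattice d h" unfolding L_def by (rule lincomb_Lattice[OF V_finite]) simp
  have Lc: "L \<in> carrier (ZV d h)" using subgroup.mem_carrier[OF Lattice_subgroup LL] .
  have fc: "f \<in> carrier (ZV d h)" using f by (simp add: Eset_def)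
  have key: "L y = f y" if y: "y \<in> ?V" "n < length y" for y
  proof -
    have yne: "y \<noteq> []" using y by auto
    have ly: "length y \<le> h" using y by (simp add: tree_V_def)
    have "L y = (\<Sum>w\<in>?V. a w * Delta d h y w)"
      unfolding L_def using y(1) by (intro sum.cong) (simp_all add: Delta_row_def Delta_sym)
    also have "\<dots> = int d * a y - (if y = [] then 0 else a (butlast y))
      - (if length y < h then (\<Sum>b<bd d y. a (y @ [b])) else 0)"
      by (rule NS[OF y(1)])
    finally have Ly: "L y = int d * a y - a (butlast y)
      - (if length y < h then (\<Sum>b<bd d y. a (y @ [b])) else 0)" using yne by simp
    let ?q = "q (take (Suc n) y)"
    have ch: "(if length y < h then (\<Sum>b<bd d y. a (y @ [b])) else 0)
       = (int d - 1) * (?q * Zf d h (length y + 1))"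
    proof (cases "length y < h")
      case True
      have "(\<Sum>b<bd d y. a (y @ [b])) = (\<Sum>b<d-1. ?q * Zf d h (length y + 1))"
      proof (rule sum.cong)
        fix b assume "b \<in> {..<d-1}"
        have "take (Suc n) (y @ [b]) = take (Suc n) y" using y(2) by simp
        then show "a (y @ [b]) = ?q * Zf d h (length y + 1)"
          using y(2) by (simp add: a_def)
      qed (simp add: yne)
      also have "\<dots> = (int d - 1) * (?q * Zf d h (length y + 1))" using d by simp
      finally show ?thesis using True by simp
    next
      case False
      then have "length y = h" using ly by simp
      then show ?thesis using False Zf_top[of d h] by simp
    qed
    show ?thesis
    proof (cases "length y = Suc n")
      case True
      have ty: "take (Suc n) y = y" using True by simp
      have ay: "a y = q y * Zf d h (Suc n)" using True ty by (simp add: a_def)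
      have ab: "a (butlast y) = - t (butlast y)" using True by (simp add: a_def)
      have "L y = q y * (int d * Zf d h (Suc n) - (int d - 1) * Zf d h (Suc n + 1)) + t (butlast y)"
        unfolding Ly ch ay ab ty using True by (simp add: algebra_simps)
      also have "int d * Zf d h (Suc n) - (int d - 1) * Zf d h (Suc n + 1) = Zf d h n"
        using Zf_rec[OF d, where l="Suc n" and h=h] True ly by simp
      also have "q y * Zf d h n = f y - t (butlast y)"
      proof -
        have byV: "butlast y \<in> ?V" using V_butlast[OF y(1)] .
        have "butlast y @ [0] \<in> ?V" using byV True ly d V_snoc[of "butlast y" 0 d h] by simp
        then have "sib d h n y (butlast y @ [0])" using y(1) True by (simp add: sib_def)
        then have "Zf d h n dvd f y - t (butlast y)" using dv by (simp add: t_def)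
        then show ?thesis unfolding q_def by simp
      qed
      finally show ?thesis by simp
    next
      case False
      have gt: "Suc n < length y" using False y(2) by simp
      have tb: "take (Suc n) (butlast y) = take (Suc n) y" using take_butlast2[OF refl gt] .
      have ay: "a y = ?q * Zf d h (length y)" using gt by (simp add: a_def)
      have ab: "a (butlast y) = ?q * Zf d h (length y - 1)" using gt tb by (simp add: a_def)
      have "L y = ?q * (int d * Zf d h (length y) - Zf d h (length y - 1) - (int d - 1) * Zf d h (length y + 1))"
        unfolding Ly ch ay ab by (simp add: algebra_simps)
      also have "int d * Zf d h (length y) - Zf d h (length y - 1) - (int d - 1) * Zf d h (length y + 1) = 0"
      proof -
        have r: "int d * Zf d h (length y) - (int d - 1) * Zf d h (length y + 1) = Zf d h (length y - 1)"
          using Zf_rec[OF d, where l="length y" and h=h] ly gt by simp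
        then show ?thesis by linarith
      qed
      finally show ?thesis using f gt by (simp add: Eset_def)
    qed
  qed
  define e where "e = (\<lambda>y. f y - L y)"
  have "e \<in> Eset d h n"
  proof -
    have "e \<in> carrier (ZV d h)" using fc Lc by (simp add: e_def ZV_carrier)
    moreover have "e x = 0" if "n < length x" for x
    proof (cases "x \<in> ?V")
      case True then show ?thesis using key[OF True that] by (simp add: e_def)
    next
      case False then show ?thesis using fc Lc by (simp add: e_def ZV_carrier)
    qed
    ultimately show ?thesis by (simp add: Eset_def)
  qed
  moreover have "(\<lambda>x. f x - e x) = L" by (simp add: e_def)
  ultimately show ?thesis using LL by blast
qed

abbreviation LC :: "nat \<Rightarrow> nat \<Rightarrow> (nat list \<Rightarrow> int) \<Rightarrow> (nat list \<Rightarrow> int) set" where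
  "LC d h f \<equiv> Lattice d h #>\<^bsub>ZV d h\<^esub> f"

lemma Gdh_carrier: "carrier (Gdh d h) = LC d h ` carrier (ZV d h)"
  by (auto simp: Gdh_def FactGroup_def RCOSETS_def)

lemma LC_carrier: "f \<in> carrier (ZV d h) \<Longrightarrow> LC d h f \<in> carrier (Gdh d h)"
  by (simp add: Gdh_carrier)

lemma Gdh_mult: "f \<in> carrier (ZV d h) \<Longrightarrow> g \<in> carrier (ZV d h) \<Longrightarrow>
   LC d h f \<otimes>\<^bsub>Gdh d h\<^esub> LC d h g = LC d h (f \<otimes>\<^bsub>ZV d h\<^esub> g)"
  unfolding Gdh_def mult_FactGroup by (rule normal.rcos_sum[OF Lattice_normal])

lemma Gdh_one: "\<one>\<^bsub>Gdh d h\<^esub> = LC d h (\<lambda>x. 0)"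
proof -
  have "LC d h (\<lambda>x. 0) = Lattice d h"
    using group.coset_mult_one[OF ZV_group subgroup.subset[OF Lattice_subgroup]]
    by (simp add: ZV_one)
  then show ?thesis by (simp add: Gdh_def FactGroup_def)
qed

lemma Gdh_inv: "f \<in> carrier (ZV d h) \<Longrightarrow> inv\<^bsub>Gdh d h\<^esub> (LC d h f) = LC d h (\<lambda>x. - f x)"
  unfolding Gdh_def
  using normal.inv_FactGroup[OF Lattice_normal, of "LC d h f"] normal.rcos_inv[OF Lattice_normal, of f]
    LC_carrier[of f d h] ZV_inv[of f d h]
  by (simp add: Gdh_def)

lemma coset_eq_gen:
  assumes "group G" "subgroup H G" "a \<in> carrier G" "b \<in> carrier G"
  shows "(H #>\<^bsub>G\<^esub> a = H #>\<^bsub>G\<^esub> b) \<longleftrightarrow> a \<otimes>\<^bsub>G\<^esub> inv\<^bsub>G\<^esub> b \<in> H"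
proof
  assume "H #>\<^bsub>G\<^esub> a = H #>\<^bsub>G\<^esub> b"
  then have "a \<in> H #>\<^bsub>G\<^esub> b" using group.rcos_self[OF assms(1) assms(3) assms(2)] by simp
  then show "a \<otimes>\<^bsub>G\<^esub> inv\<^bsub>G\<^esub> b \<in> H"
    using subgroup.rcos_module_imp[OF assms(2) assms(1) assms(4)] by blast
next
  assume "a \<otimes>\<^bsub>G\<^esub> inv\<^bsub>G\<^esub> b \<in> H"
  then have "a \<in> H #>\<^bsub>G\<^esub> b"
    using subgroup.rcos_module_rev[OF assms(2) assms(1) assms(4) assms(3)] by blast
  from group.repr_independence[OF assms(1) this assms(4) assms(2)]
  show "H #>\<^bsub>G\<^esub> a = H #>\<^bsub>G\<^esub> b" by (rule sym)
qed

lemma LC_eq: "f \<in> carrier (ZV d h) \<Longrightarrow> g \<in> carrier (ZV d h) \<Longrightarrow>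
   LC d h f = LC d h g \<longleftrightarrow> (\<lambda>x. f x - g x) \<in> Lattice d h"
  using coset_eq_gen[OF ZV_group Lattice_subgroup, of f d h g]
  by (simp add: ZV_inv ZV_mult)

definition Img :: "nat \<Rightarrow> nat \<Rightarrow> nat \<Rightarrow> (nat list \<Rightarrow> int) set set" where
  "Img d h m = LC d h ` Eset d h m"

lemma Eset_carrier: "f \<in> Eset d h m \<Longrightarrow> f \<in> carrier (ZV d h)"
  by (simp add: Eset_def)

lemma Img_subgroup: "subgroup (Img d h m) (Gdh d h)"
proof (rule group.subgroupI[OF Gdh_group])
  show "Img d h m \<subseteq> carrier (Gdh d h)"
    unfolding Img_def using LC_carrier Eset_carrier by blast
  have "(\<lambda>x. 0) \<in> Eset d h m" by (simp add: Eset_def ZV_carrier)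
  then show "Img d h m \<noteq> {}" unfolding Img_def by blast
next
  fix A assume "A \<in> Img d h m"
  then obtain f where f: "f \<in> Eset d h m" "A = LC d h f" unfolding Img_def by blast
  have "(\<lambda>x. - f x) \<in> Eset d h m" using f by (simp add: Eset_def ZV_carrier)
  then show "inv\<^bsub>Gdh d h\<^esub> A \<in> Img d h m"
    unfolding Img_def f(2) Gdh_inv[OF Eset_carrier[OF f(1)]] by blast
next
  fix A B assume "A \<in> Img d h m" "B \<in> Img d h m"
  then obtain f g where f: "f \<in> Eset d h m" "A = LC d h f" and g: "g \<in> Eset d h m" "B = LC d h g"
    unfolding Img_def by blast
  have "f \<otimes>\<^bsub>ZV d h\<^esub> g \<in> Eset d h m" using f g by (simp add: Eset_def ZV_carrier ZV_mult)
  then show "A \<otimes>\<^bsub>Gdh d h\<^esub> B \<in> Img d h m"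
    unfolding Img_def f(2) g(2) Gdh_mult[OF Eset_carrier[OF f(1)] Eset_carrier[OF g(1)]] by blast
qed

lemma basis_E: "i \<in> tree_V d h \<Longrightarrow> length i \<le> m \<Longrightarrow> basis_x i \<in> Eset d h m"
  by (auto simp: Eset_def ZV_carrier basis_x_def)

lemma Gm_sub_Img: "Gm d h m \<subseteq> Img d h m"
  unfolding Gm_def
proof (rule group.generate_subgroup_incl[OF Gdh_group _ Img_subgroup])
  show "xbar d h ` {i \<in> tree_V d h. length i \<le> m} \<subseteq> Img d h m"
    unfolding Img_def xbar_def using basis_E by blast
qed

lemma Img_sub_Gm: "f \<in> Eset d h m \<Longrightarrow> LC d h f \<in> Gm d h m"
proof (induction "\<Sum>x\<in>tree_V d h. nat \<bar>f x\<bar>" arbitrary: f rule: less_induct)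
  case less
  let ?V = "tree_V d h"
  have fc: "f \<in> carrier (ZV d h)" using less.prems by (simp add: Eset_def)
  show ?case
  proof (cases "\<forall>x\<in>?V. f x = 0")
    case True
    then have "f = (\<lambda>x. 0)" using fc by (auto simp: ZV_carrier)
    moreover have "\<one>\<^bsub>Gdh d h\<^esub> \<in> Gm d h m" unfolding Gm_def by (rule generate.one)
    ultimately show ?thesis unfolding Gdh_one by simp
  next
    case False
    then obtain i where i: "i \<in> ?V" "f i \<noteq> 0" by blast
    have li: "length i \<le> m" using i less.prems by (auto simp: Eset_def)
    have bc: "basis_x i \<in> carrier (ZV d h)" using basis_E[OF i(1) li] Eset_carrier by blast
    have xg: "LC d h (basis_x i) \<in> Gm d h m"
      unfolding Gm_def using i(1) li by (intro generate.incl) (auto simp: xbar_def)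
    define s where "s = (if f i > 0 then (1::int) else -1)"
    define f' where "f' = (\<lambda>x. f x - s * basis_x i x)"
    have f'E: "f' \<in> Eset d h m" using less.prems i(1) li by (auto simp: Eset_def ZV_carrier f'_def basis_x_def)
    have lt: "(\<Sum>x\<in>?V. nat \<bar>f' x\<bar>) < (\<Sum>x\<in>?V. nat \<bar>f x\<bar>)"
    proof (rule sum_strict_mono_ex1[OF V_finite])
      show "\<forall>x\<in>?V. nat \<bar>f' x\<bar> \<le> nat \<bar>f x\<bar>"
        using i(2) by (auto simp: f'_def basis_x_def s_def)
      show "\<exists>x\<in>?V. nat \<bar>f' x\<bar> < nat \<bar>f x\<bar>"
        using i by (intro bexI[of _ i]) (auto simp: f'_def basis_x_def s_def)
    qed
    have IH: "LC d h f' \<in> Gm d h m" using less.hyps[OF lt f'E] .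
    have f'c: "f' \<in> carrier (ZV d h)" using f'E Eset_carrier by blast
    show ?thesis
    proof (cases "f i > 0")
      case True
      have "f = f' \<otimes>\<^bsub>ZV d h\<^esub> basis_x i" using True by (auto simp: ZV_mult f'_def s_def)
      then have "LC d h f = LC d h f' \<otimes>\<^bsub>Gdh d h\<^esub> LC d h (basis_x i)"
        using Gdh_mult[OF f'c bc] by simp
      then show ?thesis unfolding Gm_def
        using generate.eng[OF IH[unfolded Gm_def] xg[unfolded Gm_def]] by simp
    next
      case False
      have nc: "(\<lambda>x. - basis_x i x) \<in> carrier (ZV d h)" using bc by (simp add: ZV_carrier)
      have "f = f' \<otimes>\<^bsub>ZV d h\<^esub> (\<lambda>x. - basis_x i x)" using False by (auto simp: ZV_mult f'_def s_def)
      then have "LC d h f = LC d h f' \<otimes>\<^bsub>Gdh d h\<^esub> inv\<^bsub>Gdh d h\<^esub> LC d h (basis_x i)"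
        using Gdh_mult[OF f'c nc] Gdh_inv[OF bc] by simp
      moreover have iv: "inv\<^bsub>Gdh d h\<^esub> LC d h (basis_x i) \<in> Gm d h m"
        unfolding Gm_def using i(1) li by (intro generate.inv) (auto simp: xbar_def)
      ultimately show ?thesis unfolding Gm_def
        using generate.eng[OF IH[unfolded Gm_def] iv[unfolded Gm_def]] by simp
    qed
  qed
qed

lemma Gm_eq: "Gm d h m = Img d h m"
  using Gm_sub_Img Img_sub_Gm unfolding Img_def by blast

lemma quot_carrier:
  "carrier ((Gdh d h)\<lparr>carrier := H1\<rparr> Mod H0) = (\<lambda>a. H0 #>\<^bsub>Gdh d h\<^esub> a) ` H1"
  unfolding FactGroup_def RCOSETS_def r_coset_def by auto

definition Pm :: "nat \<Rightarrow> nat \<Rightarrow> nat \<Rightarrow> (nat list \<Rightarrow> int) \<Rightarrow> (nat list \<Rightarrow> int) set set" where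
  "Pm d h n f = Gm d h n #>\<^bsub>Gdh d h\<^esub> LC d h f"

lemma Char:
  assumes d: "d \<ge> 3" and k: "k \<in> Eset d h (Suc n)"
  shows "(\<exists>e\<in>Eset d h n. (\<lambda>x. k x - e x) \<in> Lattice d h) \<longleftrightarrow>
     (\<forall>c c'. sib d h n c c' \<longrightarrow> Zf d h n dvd k c - k c')"
  using Char_imp[OF d k] Char_rev[OF d k] by blast

lemma P_eq:
  assumes d: "d \<ge> 3" and f: "f \<in> Eset d h (Suc n)" and g: "g \<in> Eset d h (Suc n)"
  shows "Pm d h n f = Pm d h n g \<longleftrightarrow>
     (\<forall>c c'. sib d h n c c' \<longrightarrow> Zf d h n dvd (f c - g c) - (f c' - g c'))"
proof -
  have fc: "f \<in> carrier (ZV d h)" and gc: "g \<in> carrier (ZV d h)"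
    using f g Eset_carrier by blast+
  have ngc: "(\<lambda>x. - g x) \<in> carrier (ZV d h)" using gc by (simp add: ZV_carrier)
  have sub: "subgroup (Gm d h n) (Gdh d h)" unfolding Gm_eq by (rule Img_subgroup)
  have "Pm d h n f = Pm d h n g \<longleftrightarrow>
      LC d h f \<otimes>\<^bsub>Gdh d h\<^esub> inv\<^bsub>Gdh d h\<^esub> LC d h g \<in> Gm d h n"
    unfolding Pm_def by (rule coset_eq_gen[OF Gdh_group sub LC_carrier[OF fc] LC_carrier[OF gc]])
  also have "LC d h f \<otimes>\<^bsub>Gdh d h\<^esub> inv\<^bsub>Gdh d h\<^esub> LC d h g = LC d h (\<lambda>x. f x - g x)"
    unfolding Gdh_inv[OF gc] Gdh_mult[OF fc ngc] by (simp add: ZV_mult)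
  also have "(\<dots> \<in> Gm d h n) \<longleftrightarrow> (\<exists>e\<in>Eset d h n. (\<lambda>x. (f x - g x) - e x) \<in> Lattice d h)"
  proof -
    have kc: "(\<lambda>x. f x - g x) \<in> carrier (ZV d h)" using fc gc by (simp add: ZV_carrier)
    have "(LC d h (\<lambda>x. f x - g x) \<in> Gm d h n) \<longleftrightarrow> (\<exists>e\<in>Eset d h n. LC d h (\<lambda>x. f x - g x) = LC d h e)"
      unfolding Gm_eq Img_def by blast
    also have "\<dots> \<longleftrightarrow> (\<exists>e\<in>Eset d h n. (\<lambda>x. (f x - g x) - e x) \<in> Lattice d h)"
      using LC_eq[OF kc] Eset_carrier by (metis (no_types, lifting))
    finally show ?thesis .
  qed
  also have "\<dots> \<longleftrightarrow> (\<forall>c c'. sib d h n c c' \<longrightarrow> Zf d h n dvd (f c - g c) - (f c' - g c'))"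
  proof -
    have "(\<lambda>x. f x - g x) \<in> Eset d h (Suc n)" using f g by (simp add: Eset_def ZV_carrier)
    from Char[OF d this] show ?thesis by simp
  qed
  finally show ?thesis .
qed

lemma int_dvd_range_eq:
  fixes a b t :: int
  assumes "0 \<le> a" "a < t" "0 \<le> b" "b < t" "t dvd a - b"
  shows "a = b"
proof -
  have "a mod t = b mod t" using assms(5) by (simp add: mod_eq_dvd_iff)
  then show ?thesis using assms by simp
qed

lemma c0_V:
  assumes d: "d \<ge> 3" and c: "c \<in> tree_V d h" "length c = Suc n"
  shows "butlast c @ [0] \<in> tree_V d h" "sib d h n c (butlast c @ [0])"
proof -
  have lc: "Suc n \<le> h" using c by (simp add: tree_V_def)
  show a: "butlast c @ [0] \<in> tree_V d h"
    using V_butlast[OF c(1)] c(2) lc d V_snoc[of "butlast c" 0 d h] by simp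
  show "sib d h n c (butlast c @ [0])" using a c by (simp add: sib_def)
qed

definition Sset :: "nat \<Rightarrow> nat \<Rightarrow> nat \<Rightarrow> nat list set" where
  "Sset d h n = {c \<in> tree_V d h. length c = Suc n \<and> last c \<noteq> 0}"

definition Rset :: "nat \<Rightarrow> nat \<Rightarrow> nat \<Rightarrow> (nat list \<Rightarrow> int) set" where
  "Rset d h n = {g. (\<forall>x. x \<notin> Sset d h n \<longrightarrow> g x = 0) \<and> (\<forall>x\<in>Sset d h n. 0 \<le> g x \<and> g x < Zf d h n)}"

lemma R_E: "Rset d h n \<subseteq> Eset d h (Suc n)"
  by (auto simp: Rset_def Eset_def Sset_def ZV_carrier)

lemma Zf_pos: "d \<ge> 3 \<Longrightarrow> n < h \<Longrightarrow> Zf d h n > 0"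
proof -
  assume "d \<ge> 3" "n < h"
  moreover have "h + 1 - n = Suc (h - n)" using \<open>n < h\<close> by simp
  ultimately show ?thesis unfolding Zf_def using theta_pos[of d "h - n"] by simp
qed

lemma last0: "c \<noteq> [] \<Longrightarrow> last c = 0 \<Longrightarrow> c = butlast c @ [0]"
  by (metis append_butlast_last_id)

lemma P_surj:
  assumes d: "d \<ge> 3" and nh: "n < h" and f: "f \<in> Eset d h (Suc n)"
  shows "\<exists>g\<in>Rset d h n. Pm d h n f = Pm d h n g"
proof -
  let ?t = "Zf d h n"
  have tp: "?t > 0" using Zf_pos[OF d nh] .
  define g where "g x = (if x \<in> Sset d h n then (f x - f (butlast x @ [0])) mod ?t else 0)" for x
  have gR: "g \<in> Rset d h n" using tp by (simp add: Rset_def g_def)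
  have gE: "g \<in> Eset d h (Suc n)" using gR R_E by blast
  have one: "?t dvd (f c - g c) - f (butlast c @ [0])"
    if c: "c \<in> tree_V d h" "length c = Suc n" for c
  proof (cases "c \<in> Sset d h n")
    case True
    have "(f c - g c) - f (butlast c @ [0]) =
        (f c - f (butlast c @ [0])) - (f c - f (butlast c @ [0])) mod ?t"
      using True by (simp add: g_def)
    also have "?t dvd \<dots>" by (simp add: minus_mod_eq_mult_div)
    finally show ?thesis .
  next
    case False
    then have "last c = 0" using c by (simp add: Sset_def)
    moreover have "c \<noteq> []" using c(2) by auto
    ultimately have "c = butlast c @ [0]" using last0[of c] by blast
    then have "(f c - g c) - f (butlast c @ [0]) = 0" using False by (simp add: g_def)
    then show ?thesis by simp
  qed
  have "\<forall>c c'. sib d h n c c' \<longrightarrow> ?t dvd (f c - g c) - (f c' - g c')"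
  proof (intro allI impI)
    fix c c' assume s: "sib d h n c c'"
    then have c: "c \<in> tree_V d h" "length c = Suc n" and c': "c' \<in> tree_V d h" "length c' = Suc n"
      and bl: "butlast c = butlast c'" by (auto simp: sib_def)
    have "?t dvd ((f c - g c) - f (butlast c @ [0])) - ((f c' - g c') - f (butlast c' @ [0]))"
      using one[OF c] one[OF c'] by (rule dvd_diff)
    moreover have "((f c - g c) - f (butlast c @ [0])) - ((f c' - g c') - f (butlast c' @ [0]))
        = (f c - g c) - (f c' - g c')" using bl by simp
    ultimately show "?t dvd (f c - g c) - (f c' - g c')" by simp
  qed
  then have "Pm d h n f = Pm d h n g" using P_eq[OF d f gE] by blast
  then show ?thesis using gR by blast
qed

lemma P_inj:
  assumes d: "d \<ge> 3" and nh: "n < h"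
  shows "inj_on (Pm d h n) (Rset d h n)"
proof (rule inj_onI)
  fix g1 g2 assume g1: "g1 \<in> Rset d h n" and g2: "g2 \<in> Rset d h n" and eq: "Pm d h n g1 = Pm d h n g2"
  have dv: "\<forall>c c'. sib d h n c c' \<longrightarrow> Zf d h n dvd (g1 c - g2 c) - (g1 c' - g2 c')"
    using P_eq[OF d] g1 g2 R_E eq by blast
  show "g1 = g2"
  proof
    fix x
    show "g1 x = g2 x"
    proof (cases "x \<in> Sset d h n")
      case True
      then have x: "x \<in> tree_V d h" "length x = Suc n" by (auto simp: Sset_def)
      have ns: "butlast x @ [0] \<notin> Sset d h n" by (simp add: Sset_def)
      have "Zf d h n dvd (g1 x - g2 x) - (g1 (butlast x @ [0]) - g2 (butlast x @ [0]))"
        using dv c0_V(2)[OF d x] by blast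
      then have "Zf d h n dvd g1 x - g2 x" using ns g1 g2 by (simp add: Rset_def)
      then show ?thesis using g1 g2 True int_dvd_range_eq[of "g1 x" "Zf d h n" "g2 x"]
        by (simp add: Rset_def)
    next
      case False
      then show ?thesis using g1 g2 by (simp add: Rset_def)
    qed
  qed
qed

lemma finite_Sset: "finite (Sset d h n)"
  using V_finite[of d h] by (simp add: Sset_def)

lemma card_R:
  assumes d: "d \<ge> 3" and nh: "n < h"
  shows "card (Rset d h n) = theta d (h + 1 - n) ^ card (Sset d h n)"
proof -
  let ?S = "Sset d h n" and ?t = "Zf d h n"
  define ext where "ext g = (\<lambda>x. if x \<in> ?S then g x else 0)" for g :: "nat list \<Rightarrow> int"
  have R: "Rset d h n = ext ` (PiE ?S (\<lambda>_. {0..<?t}))"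
  proof
    show "Rset d h n \<subseteq> ext ` (PiE ?S (\<lambda>_. {0..<?t}))"
    proof
      fix g assume g: "g \<in> Rset d h n"
      have "restrict g ?S \<in> PiE ?S (\<lambda>_. {0..<?t})" using g by (auto simp: Rset_def)
      moreover have "ext (restrict g ?S) = g" using g by (auto simp: ext_def Rset_def)
      ultimately show "g \<in> ext ` (PiE ?S (\<lambda>_. {0..<?t}))" by (metis image_eqI)
    qed
    show "ext ` (PiE ?S (\<lambda>_. {0..<?t})) \<subseteq> Rset d h n"
      by (auto simp: ext_def Rset_def PiE_def Pi_def)
  qed
  have inj: "inj_on ext (PiE ?S (\<lambda>_. {0..<?t}))"
  proof (rule inj_onI)
    fix g1 g2 assume "g1 \<in> PiE ?S (\<lambda>_. {0..<?t})" "g2 \<in> PiE ?S (\<lambda>_. {0..<?t})" "ext g1 = ext g2"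
    then show "g1 = g2"
      by (intro PiE_ext[of g1 ?S "\<lambda>_. {0..<?t}"]) (auto simp: ext_def fun_eq_iff split: if_splits)
  qed
  have "card (Rset d h n) = card (PiE ?S (\<lambda>_. {0..<?t}))"
    unfolding R by (rule card_image[OF inj])
  also have "\<dots> = (\<Prod>i\<in>?S. card {0..<?t})" by (rule card_PiE[OF finite_Sset])
  also have "\<dots> = nat ?t ^ card ?S" by simp
  also have "nat ?t = theta d (h + 1 - n)" by (simp add: Zf_def)
  finally show ?thesis .
qed

lemma card_S0:
  assumes d: "d \<ge> 3" and h: "h \<ge> 1"
  shows "card (Sset d h 0) = d - 1"
proof -
  have "Sset d h 0 = (\<lambda>a. [a]) ` {1..<d}"
  proof
    show "Sset d h 0 \<subseteq> (\<lambda>a. [a]) ` {1..<d}"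
    proof
      fix c assume c: "c \<in> Sset d h 0"
      then obtain a where a: "c = [a]" by (auto simp: Sset_def length_Suc_conv)
      then show "c \<in> (\<lambda>a. [a]) ` {1..<d}" using c by (auto simp: Sset_def tree_V_def)
    qed
    show "(\<lambda>a. [a]) ` {1..<d} \<subseteq> Sset d h 0"
      using h by (auto simp: Sset_def tree_V_def)
  qed
  moreover have "inj_on (\<lambda>a. [a]) {1..<d}" by (auto simp: inj_on_def)
  ultimately show ?thesis by (simp add: card_image)
qed

lemma card_Sn:
  assumes d: "d \<ge> 3" and n: "1 \<le> n" and nh: "n < h"
  shows "card (Sset d h n) = d * (d - 1) ^ (n - 1) * (d - 2)"
proof -
  let ?L = "{ys. set ys \<subseteq> {..<d-1} \<and> length ys = n - 1}"
  let ?F = "\<lambda>(a, ys, b). a # ys @ [b :: nat]"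
  have "Sset d h n = ?F ` ({..<d} \<times> ?L \<times> {1..<d-1})"
  proof
    show "Sset d h n \<subseteq> ?F ` ({..<d} \<times> ?L \<times> {1..<d-1})"
    proof
      fix c assume c: "c \<in> Sset d h n"
      then have cV: "c \<in> tree_V d h" and lc: "length c = Suc n" and la: "last c \<noteq> 0"
        by (auto simp: Sset_def)
      obtain a zs where az: "c = a # zs" using lc by (cases c) auto
      have zne: "zs \<noteq> []" using az lc n by auto
      define ys where "ys = butlast zs"
      define b where "b = last zs"
      have zs: "zs = ys @ [b]" using zne by (simp add: ys_def b_def)
      have cc: "c = a # ys @ [b]" using az zs by simp
      have V: "a < d" "\<forall>x\<in>set (ys @ [b]). x < d - 1" using cV unfolding cc by (auto simp: V_Cons)
      have "b \<noteq> 0" using la cc by simp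
      moreover have "length ys = n - 1" using lc cc by simp
      ultimately show "c \<in> ?F ` ({..<d} \<times> ?L \<times> {1..<d-1})"
        using V cc by (intro image_eqI[of _ _ "(a, ys, b)"]) auto
    qed
    show "?F ` ({..<d} \<times> ?L \<times> {1..<d-1}) \<subseteq> Sset d h n"
      using n nh by (auto simp: Sset_def V_Cons)
  qed
  moreover have "inj_on ?F ({..<d} \<times> ?L \<times> {1..<d-1})"
    by (auto simp: inj_on_def)
  ultimately have "card (Sset d h n) = card ({..<d} \<times> ?L \<times> {1..<d-1})"
    by (simp add: card_image)
  also have "\<dots> = d * ((d - 1) ^ (n - 1) * (d - 2))"
    using d by (simp add: card_cartesian_product card_lists_length_eq numeral_2_eq_2)
  finally show ?thesis by simp
qed

theorem lemma8p17:
  fixes d h n :: nat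
  assumes "d \<ge> 3" and "h \<ge> 1" and "n \<le> h - 1"
  shows "order ((Gdh d h)\<lparr>carrier := Gm d h (Suc n)\<rparr> Mod Gm d h n) =
    (if n = 0 then theta d (h + 1) ^ (d - 1)
     else theta d (h + 1 - n) ^ ((d - 2) * d * (d - 1) ^ (n - 1)))"
proof -
  have d: "d \<ge> 3" using assms(1) .
  have nh: "n < h" using assms(2,3) by simp
  have "carrier ((Gdh d h)\<lparr>carrier := Gm d h (Suc n)\<rparr> Mod Gm d h n) = Pm d h n ` Eset d h (Suc n)"
    unfolding quot_carrier Gm_eq[of d h "Suc n"] Img_def image_image Pm_def Gm_eq[of d h n] ..
  also have "\<dots> = Pm d h n ` Rset d h n"
  proof
    show "Pm d h n ` Eset d h (Suc n) \<subseteq> Pm d h n ` Rset d h n"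
      using P_surj[OF d nh] by blast
    show "Pm d h n ` Rset d h n \<subseteq> Pm d h n ` Eset d h (Suc n)"
      using R_E by blast
  qed
  finally have "order ((Gdh d h)\<lparr>carrier := Gm d h (Suc n)\<rparr> Mod Gm d h n) = card (Rset d h n)"
    unfolding order_def using card_image[OF P_inj[OF d nh]] by simp
  also have "\<dots> = theta d (h + 1 - n) ^ card (Sset d h n)" by (rule card_R[OF d nh])
  finally have o: "order ((Gdh d h)\<lparr>carrier := Gm d h (Suc n)\<rparr> Mod Gm d h n) =
    theta d (h + 1 - n) ^ card (Sset d h n)" .
  show ?thesis
  proof (cases "n = 0")
    case True
    then show ?thesis using o card_S0[OF d assms(2)] by simp
  next
    case False
    then have "card (Sset d h n) = (d - 2) * d * (d - 1) ^ (n - 1)"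
      using card_Sn[OF d _ nh] by (simp add: mult_ac)
    then show ?thesis using o False by simp
  qed
qed

end
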